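(* Let $\mathbf{L}=(L,\le)$ be a finite nontrivial join-semilattice with greatest element $1$ and let $(R,\vee,\circ)$ be a subsemiring of $(\mathrm{JM}(\mathbf{L}),\vee,\circ)$ such that (i) $k_a\in R$ for every $a\in L$; (ii) for every $f\in R$ there exists $a\in L$ with $k_a\le f$ (pointwise); (iii) for all $a\in L$ and all $b\in L\setminus\{1\}$ there exists $f\in R$ with $f(x)=b$ whenever $x\le a$ and $f(x)>b$ otherwise. Then $(R,\vee,\circ)$ is a finite simple additively idempotent semiring whose greatest element is left but not right absorbing. Conversely, every finite simple additively idempotent semiring $(S,+,\cdot)$ with $|S|>2$ whose greatest element is left but not right absorbing is isomorphic to such a semiring $(R,\vee,\circ)$ for some such semilattice $\mathbf{L}$.
   Context: A semiring is a nonempty set with a commutative semigroup operation $+$ and a semigroup operation $\cdot$ satisfying both distributive laws. It is simple if its only congruences are the identity and the full relation; additively idempotent if $r+r=r$; then $x\le y:\Leftrightarrow x+y=y$ is a partial order, and for finite semirings the greatest element is the sum of all elements. An element $r$ is right absorbing if $sr=r$ for all $s$, left absorbing if $rs=r$ for all $s$. For a finite join-semilattice $\mathbf{L}$, $\mathrm{JM}(\mathbf{L})$ is the set of maps $f:L\to L$ with $f(x\vee y)=f(x)\vee f(y)$, a semiring under pointwise join and composition. For $a\in L$, $k_a$ is the constant map with value $a$. *)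

theory Defs
  imports "HOL-Library.FuncSet"
begin

definition semiring_on :: "'a set \<Rightarrow> ('a \<Rightarrow> 'a \<Rightarrow> 'a) \<Rightarrow> ('a \<Rightarrow> 'a \<Rightarrow> 'a) \<Rightarrow> bool" where
  "semiring_on S add mul \<longleftrightarrow> S \<noteq> {}
     \<and> (\<forall>x\<in>S. \<forall>y\<in>S. add x y \<in> S \<and> mul x y \<in> S)
     \<and> (\<forall>x\<in>S. \<forall>y\<in>S. \<forall>z\<in>S. add (add x y) z = add x (add y z))
     \<and> (\<forall>x\<in>S. \<forall>y\<in>S. add x y = add y x)
     \<and> (\<forall>x\<in>S. \<forall>y\<in>S. \<forall>z\<in>S. mul (mul x y) z = mul x (mul y z))
     \<and> (\<forall>x\<in>S. \<forall>y\<in>S. \<forall>z\<in>S. mul x (add y z) = add (mul x y) (mul x z))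
     \<and> (\<forall>x\<in>S. \<forall>y\<in>S. \<forall>z\<in>S. mul (add x y) z = add (mul x z) (mul y z))"

definition semiring_congruence :: "'a set \<Rightarrow> ('a \<Rightarrow> 'a \<Rightarrow> 'a) \<Rightarrow> ('a \<Rightarrow> 'a \<Rightarrow> 'a) \<Rightarrow> ('a \<times> 'a) set \<Rightarrow> bool" where
  "semiring_congruence S add mul \<rho> \<longleftrightarrow> equiv S \<rho>
     \<and> (\<forall>x y u v. (x, y) \<in> \<rho> \<longrightarrow> (u, v) \<in> \<rho> \<longrightarrow>
           (add x u, add y v) \<in> \<rho> \<and> (mul x u, mul y v) \<in> \<rho>)"

definition simple_semiring :: "'a set \<Rightarrow> ('a \<Rightarrow> 'a \<Rightarrow> 'a) \<Rightarrow> ('a \<Rightarrow> 'a \<Rightarrow> 'a) \<Rightarrow> bool" where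
  "simple_semiring S add mul \<longleftrightarrow> semiring_on S add mul
     \<and> (\<forall>\<rho>. semiring_congruence S add mul \<rho> \<longrightarrow> \<rho> = Id_on S \<or> \<rho> = S \<times> S)"

definition add_idempotent :: "'a set \<Rightarrow> ('a \<Rightarrow> 'a \<Rightarrow> 'a) \<Rightarrow> bool" where
  "add_idempotent S add \<longleftrightarrow> (\<forall>x\<in>S. add x x = x)"

text \<open>Greatest element w.r.t. x \<le> y iff x + y = y.\<close>
definition greatest_elem :: "'a set \<Rightarrow> ('a \<Rightarrow> 'a \<Rightarrow> 'a) \<Rightarrow> 'a \<Rightarrow> bool" where
  "greatest_elem S add g \<longleftrightarrow> g \<in> S \<and> (\<forall>x\<in>S. add x g = g)"

definition left_absorbing :: "'a set \<Rightarrow> ('a \<Rightarrow> 'a \<Rightarrow> 'a) \<Rightarrow> 'a \<Rightarrow> bool" where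
  "left_absorbing S mul r \<longleftrightarrow> (\<forall>s\<in>S. mul r s = r)"

definition right_absorbing :: "'a set \<Rightarrow> ('a \<Rightarrow> 'a \<Rightarrow> 'a) \<Rightarrow> 'a \<Rightarrow> bool" where
  "right_absorbing S mul r \<longleftrightarrow> (\<forall>s\<in>S. mul s r = r)"

definition is_lub :: "'b set \<Rightarrow> ('b \<Rightarrow> 'b \<Rightarrow> bool) \<Rightarrow> 'b \<Rightarrow> 'b \<Rightarrow> 'b \<Rightarrow> bool" where
  "is_lub L le x y z \<longleftrightarrow> z \<in> L \<and> le x z \<and> le y z \<and> (\<forall>w\<in>L. le x w \<and> le y w \<longrightarrow> le z w)"

definition join_semilattice :: "'b set \<Rightarrow> ('b \<Rightarrow> 'b \<Rightarrow> bool) \<Rightarrow> bool" where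
  "join_semilattice L le \<longleftrightarrow>
     (\<forall>x\<in>L. le x x)
     \<and> (\<forall>x\<in>L. \<forall>y\<in>L. le x y \<and> le y x \<longrightarrow> x = y)
     \<and> (\<forall>x\<in>L. \<forall>y\<in>L. \<forall>z\<in>L. le x y \<and> le y z \<longrightarrow> le x z)
     \<and> (\<forall>x\<in>L. \<forall>y\<in>L. \<exists>z. is_lub L le x y z)"

definition sl_join :: "'b set \<Rightarrow> ('b \<Rightarrow> 'b \<Rightarrow> bool) \<Rightarrow> 'b \<Rightarrow> 'b \<Rightarrow> 'b" where
  "sl_join L le x y = (THE z. is_lub L le x y z)"

definition JM :: "'b set \<Rightarrow> ('b \<Rightarrow> 'b \<Rightarrow> bool) \<Rightarrow> ('b \<Rightarrow> 'b) set" where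
  "JM L le = {f \<in> L \<rightarrow>\<^sub>E L. \<forall>x\<in>L. \<forall>y\<in>L. f (sl_join L le x y) = sl_join L le (f x) (f y)}"

text \<open>Pointwise join of maps; multiplication is composition  compose L f g = (\<lambda>x\<in>L. f (g x)).\<close>
definition jm_join :: "'b set \<Rightarrow> ('b \<Rightarrow> 'b \<Rightarrow> bool) \<Rightarrow> ('b \<Rightarrow> 'b) \<Rightarrow> ('b \<Rightarrow> 'b) \<Rightarrow> ('b \<Rightarrow> 'b)" where
  "jm_join L le f g = (\<lambda>x\<in>L. sl_join L le (f x) (g x))"

definition const_map :: "'b set \<Rightarrow> 'b \<Rightarrow> ('b \<Rightarrow> 'b)" where
  "const_map L a = (\<lambda>x\<in>L. a)"

definition subsemiring_JM :: "'b set \<Rightarrow> ('b \<Rightarrow> 'b \<Rightarrow> bool) \<Rightarrow> ('b \<Rightarrow> 'b) set \<Rightarrow> bool" where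
  "subsemiring_JM L le R \<longleftrightarrow> R \<noteq> {} \<and> R \<subseteq> JM L le
     \<and> (\<forall>f\<in>R. \<forall>g\<in>R. jm_join L le f g \<in> R \<and> compose L f g \<in> R)"

definition admissible :: "'b set \<Rightarrow> ('b \<Rightarrow> 'b \<Rightarrow> bool) \<Rightarrow> 'b \<Rightarrow> ('b \<Rightarrow> 'b) set \<Rightarrow> bool" where
  "admissible L le one R \<longleftrightarrow>
     join_semilattice L le \<and> finite L \<and> card L \<ge> 2
     \<and> one \<in> L \<and> (\<forall>x\<in>L. le x one)
     \<and> subsemiring_JM L le R
     \<and> (\<forall>a\<in>L. const_map L a \<in> R)
     \<and> (\<forall>f\<in>R. \<exists>a\<in>L. \<forall>x\<in>L. le a (f x))
     \<and> (\<forall>a\<in>L. \<forall>b\<in>L - {one}. \<exists>f\<in>R. \<forall>x\<in>L.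
          (le x a \<longrightarrow> f x = b) \<and> (\<not> le x a \<longrightarrow> le b (f x) \<and> f x \<noteq> b))"

end

theory Submission
  imports Defs
begin


locale adm =
  fixes L :: "'b set" and le one R
  assumes A: "admissible L le one R"
begin

lemma js: "join_semilattice L le" using A by (simp add: admissible_def)
lemma rfl0: "\<forall>x\<in>L. le x x"
  using js[unfolded join_semilattice_def, THEN conjunct1] .
lemma asym0: "\<forall>x\<in>L. \<forall>y\<in>L. le x y \<and> le y x \<longrightarrow> x = y"
  using js[unfolded join_semilattice_def, THEN conjunct2, THEN conjunct1] .
lemma rfl: "x\<in>L \<Longrightarrow> le x x" using rfl0 by blast
lemma asym: "x\<in>L \<Longrightarrow> y\<in>L \<Longrightarrow> le x y \<Longrightarrow> le y x \<Longrightarrow> x = y" using asym0 by blast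
lemma trns0: "\<forall>x\<in>L. \<forall>y\<in>L. \<forall>z\<in>L. le x y \<and> le y z \<longrightarrow> le x z"
  using js[unfolded join_semilattice_def, THEN conjunct2, THEN conjunct2, THEN conjunct1] .
lemma lub0: "\<forall>x\<in>L. \<forall>y\<in>L. \<exists>z. is_lub L le x y z"
  using js[unfolded join_semilattice_def, THEN conjunct2, THEN conjunct2, THEN conjunct2] .
lemma trns: "x\<in>L \<Longrightarrow> y\<in>L \<Longrightarrow> z\<in>L \<Longrightarrow> le x y \<Longrightarrow> le y z \<Longrightarrow> le x z" using trns0 by blast

lemma lub_unique: assumes "x\<in>L" "y\<in>L" "is_lub L le x y z" shows "sl_join L le x y = z"
proof -
  have "\<And>z'. is_lub L le x y z' \<Longrightarrow> z' = z" using assms(3) asym unfolding is_lub_def by blast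
  then show ?thesis unfolding sl_join_def using assms(3) by (rule the_equality[rotated])
qed

lemma lub: assumes "x\<in>L" "y\<in>L" shows "is_lub L le x y (sl_join L le x y)"
proof -
  obtain z where z: "is_lub L le x y z" using lub0 assms by blast
  then show ?thesis using lub_unique[OF assms z] by simp
qed

lemma J_in: "x\<in>L \<Longrightarrow> y\<in>L \<Longrightarrow> sl_join L le x y \<in> L" using lub unfolding is_lub_def by blast
lemma J_ub1: "x\<in>L \<Longrightarrow> y\<in>L \<Longrightarrow> le x (sl_join L le x y)" using lub unfolding is_lub_def by blast
lemma J_ub2: "x\<in>L \<Longrightarrow> y\<in>L \<Longrightarrow> le y (sl_join L le x y)" using lub unfolding is_lub_def by blast
lemma J_least: "x\<in>L \<Longrightarrow> y\<in>L \<Longrightarrow> w\<in>L \<Longrightarrow> le x w \<Longrightarrow> le y w \<Longrightarrow> le (sl_join L le x y) w"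
  using lub unfolding is_lub_def by blast
lemma J_eq: "x\<in>L \<Longrightarrow> y\<in>L \<Longrightarrow> le x y \<Longrightarrow> sl_join L le x y = y"
  by (rule lub_unique) (auto simp: is_lub_def rfl)
lemma J_comm: "x\<in>L \<Longrightarrow> y\<in>L \<Longrightarrow> sl_join L le x y = sl_join L le y x"
  by (rule lub_unique) (auto simp: is_lub_def J_in J_ub1 J_ub2 J_least)
lemma J_idem: "x\<in>L \<Longrightarrow> sl_join L le x x = x" by (simp add: J_eq rfl)
lemma J_assoc: assumes "x\<in>L" "y\<in>L" "z\<in>L"
  shows "sl_join L le (sl_join L le x y) z = sl_join L le x (sl_join L le y z)"
proof (rule sym, rule lub_unique)
  show "x\<in>L" "sl_join L le y z \<in> L" using assms J_in by auto
  let ?m = "sl_join L le (sl_join L le x y) z"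
  have m: "?m \<in> L" "le (sl_join L le x y) ?m" "le z ?m" using assms J_in J_ub1 J_ub2 by auto
  have xm: "le x ?m" using trns[of x "sl_join L le x y" ?m] m assms J_in J_ub1 by auto
  have ym: "le y ?m" using trns[of y "sl_join L le x y" ?m] m assms J_in J_ub2 by auto
  show "is_lub L le x (sl_join L le y z) ?m"
    unfolding is_lub_def
  proof (intro conjI ballI impI)
    show "?m \<in> L" "le x ?m" using m xm by auto
    show "le (sl_join L le y z) ?m" using J_least assms m ym by auto
    fix w assume w: "w\<in>L" "le x w \<and> le (sl_join L le y z) w"
    have "le y w" "le z w" using trns[of y "sl_join L le y z" w] trns[of z "sl_join L le y z" w]
      w assms J_in J_ub1 J_ub2 by auto
    then show "le ?m w" using J_least w assms J_in by auto
  qed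
qed

lemma RJM: "R \<subseteq> JM L le" using A by (simp add: admissible_def subsemiring_JM_def)
lemma R_JM: "f\<in>R \<Longrightarrow> f \<in> JM L le" by (rule subsetD[OF RJM])
lemma R_PiE: "f\<in>R \<Longrightarrow> f \<in> L \<rightarrow>\<^sub>E L" using R_JM[of f] unfolding JM_def by simp
lemma R_app: "f\<in>R \<Longrightarrow> x\<in>L \<Longrightarrow> f x \<in> L" using R_PiE[of f] by (rule PiE_mem)
lemma R_ext: "f\<in>R \<Longrightarrow> f \<in> extensional L" using R_PiE[of f] by (simp add: PiE_def)
lemma R_hom: "f\<in>R \<Longrightarrow> x\<in>L \<Longrightarrow> y\<in>L \<Longrightarrow> f (sl_join L le x y) = sl_join L le (f x) (f y)"
  using R_JM[of f] unfolding JM_def by simp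
lemma R_cl: "f\<in>R \<Longrightarrow> g\<in>R \<Longrightarrow> jm_join L le f g \<in> R \<and> compose L f g \<in> R"
  using A by (simp add: admissible_def subsemiring_JM_def)
lemma R_ne: "R \<noteq> {}" using A by (simp add: admissible_def subsemiring_JM_def)
lemma one: "one \<in> L" "\<And>x. x\<in>L \<Longrightarrow> le x one" using A by (auto simp: admissible_def)
lemma constR: "a\<in>L \<Longrightarrow> const_map L a \<in> R" using A by (simp add: admissible_def)
lemma lowb: "f\<in>R \<Longrightarrow> \<exists>a\<in>L. \<forall>x\<in>L. le a (f x)" using A by (simp add: admissible_def)
lemma sep: "a\<in>L \<Longrightarrow> b\<in>L \<Longrightarrow> b \<noteq> one \<Longrightarrow> \<exists>f\<in>R. \<forall>x\<in>L.
          (le x a \<longrightarrow> f x = b) \<and> (\<not> le x a \<longrightarrow> le b (f x) \<and> f x \<noteq> b)"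
  using A by (simp add: admissible_def)
lemma finL: "finite L" and cardL: "card L \<ge> 2" using A by (auto simp: admissible_def)

lemma jm_app: "x\<in>L \<Longrightarrow> jm_join L le f g x = sl_join L le (f x) (g x)" by (simp add: jm_join_def)
lemma jm_ext: "jm_join L le f g \<in> extensional L" by (simp add: jm_join_def)
lemma c_app: "x\<in>L \<Longrightarrow> const_map L a x = a" by (simp add: const_map_def)
lemma c_ext: "const_map L a \<in> extensional L" by (simp add: const_map_def)

lemma comp_const: "f\<in>R \<Longrightarrow> x\<in>L \<Longrightarrow> compose L f (const_map L x) = const_map L (f x)"
  by (rule extensionalityI[OF compose_extensional c_ext]) (simp add: compose_eq c_app)

lemma semiring: "semiring_on R (jm_join L le) (compose L)"
  unfolding semiring_on_def
proof (intro conjI ballI)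
  show "R \<noteq> {}" by (rule R_ne)
  fix x y assume "x\<in>R" "y\<in>R" then show "jm_join L le x y \<in> R" "compose L x y \<in> R" using R_cl by auto
next
  fix x y z assume h: "x\<in>R" "y\<in>R" "z\<in>R"
  show "jm_join L le (jm_join L le x y) z = jm_join L le x (jm_join L le y z)"
    by (rule extensionalityI[OF jm_ext jm_ext]) (simp add: jm_app J_assoc R_app h)
  show "compose L (compose L x y) z = compose L x (compose L y z)"
    by (rule extensionalityI[OF compose_extensional compose_extensional]) (simp add: compose_eq R_app h)
  show "compose L x (jm_join L le y z) = jm_join L le (compose L x y) (compose L x z)"
    by (rule extensionalityI[OF compose_extensional jm_ext]) (simp add: compose_eq jm_app R_app R_hom h)
  show "compose L (jm_join L le x y) z = jm_join L le (compose L x z) (compose L y z)"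
    by (rule extensionalityI[OF compose_extensional jm_ext]) (simp add: compose_eq jm_app R_app h)
next
  fix x y assume h: "x\<in>R" "y\<in>R"
  show "jm_join L le x y = jm_join L le y x"
    by (rule extensionalityI[OF jm_ext jm_ext]) (simp add: jm_app J_comm R_app h)
qed

lemma idem: "add_idempotent R (jm_join L le)"
  unfolding add_idempotent_def
proof
  fix f assume "f\<in>R"
  then show "jm_join L le f f = f"
    by (intro extensionalityI[OF jm_ext R_ext]) (auto simp: jm_app J_idem R_app)
qed

lemma finR: "finite R"
proof (rule finite_subset)
  show "R \<subseteq> L \<rightarrow>\<^sub>E L" using R_PiE by blast
  show "finite (L \<rightarrow>\<^sub>E L)" by (rule finite_PiE) (use finL in auto)
qed

lemma greatest: "greatest_elem R (jm_join L le) (const_map L one) \<and> left_absorbing R (compose L) (const_map L one)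
   \<and> \<not> right_absorbing R (compose L) (const_map L one)"
proof (intro conjI)
  show "greatest_elem R (jm_join L le) (const_map L one)"
    unfolding greatest_elem_def
  proof (intro conjI ballI)
    show "const_map L one \<in> R" using constR one by auto
    fix f assume "f\<in>R"
    then show "jm_join L le f (const_map L one) = const_map L one"
      by (intro extensionalityI[OF jm_ext c_ext]) (auto simp: jm_app c_app J_eq R_app one)
  qed
  show "left_absorbing R (compose L) (const_map L one)"
    unfolding left_absorbing_def
    by (intro ballI extensionalityI[OF compose_extensional c_ext]) (auto simp: compose_eq c_app R_app)
  obtain a where a: "a\<in>L" "a \<noteq> one"
  proof -
    have "\<not> L \<subseteq> {one}"
    proof
      assume "L \<subseteq> {one}"
      then have "card L \<le> card {one}" using card_mono[of "{one}" L] by simp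
      then show False using cardL by simp
    qed
    then show ?thesis using that by auto
  qed
  have "compose L (const_map L a) (const_map L one) one = a" using a one by (simp add: compose_eq c_app)
  then have "compose L (const_map L a) (const_map L one) \<noteq> const_map L one" using a one by (auto simp: c_app)
  then show "\<not> right_absorbing R (compose L) (const_map L one)"
    unfolding right_absorbing_def using constR a by blast
qed

lemma simple: "simple_semiring R (jm_join L le) (compose L)"
  unfolding simple_semiring_def
proof (intro conjI allI impI semiring)
  fix \<rho> assume cg: "semiring_congruence R (jm_join L le) (compose L) \<rho>"
  have eq: "equiv R \<rho>" and cp: "\<And>x y u v. (x,y)\<in>\<rho> \<Longrightarrow> (u,v)\<in>\<rho> \<Longrightarrow>
     (jm_join L le x u, jm_join L le y v) \<in> \<rho> \<and> (compose L x u, compose L y v) \<in> \<rho>"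
    using cg unfolding semiring_congruence_def by auto
  have sub: "\<rho> \<subseteq> R \<times> R" using eq by (simp add: equiv_def refl_on_def)
  have rf: "\<And>x. x\<in>R \<Longrightarrow> (x,x)\<in>\<rho>" using eq by (simp add: equiv_def refl_on_def)
  have sy: "\<And>x y. (x,y)\<in>\<rho> \<Longrightarrow> (y,x)\<in>\<rho>" using eq by (meson equiv_def symD)
  have tr: "\<And>x y z. (x,y)\<in>\<rho> \<Longrightarrow> (y,z)\<in>\<rho> \<Longrightarrow> (x,z)\<in>\<rho>" using eq by (meson equiv_def transD)
  show "\<rho> = Id_on R \<or> \<rho> = R \<times> R"
  proof (cases "\<rho> = Id_on R")
    case True then show ?thesis by simp
  next
    assume "\<rho> \<noteq> Id_on R"
    then obtain f g where fg: "(f,g)\<in>\<rho>" "f\<noteq>g"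
      using sub rf by (auto simp: Id_on_def)
    have fR: "f\<in>R" and gR: "g\<in>R" using fg sub by auto
    let ?j = "jm_join L le f g"
    have j1: "(f, ?j) \<in> \<rho>" using cp[OF rf[OF fR] fg(1)] idem fR by (simp add: add_idempotent_def)
    have j2: "(g, ?j) \<in> \<rho>" using sy[OF conjunct1[OF cp[OF fg(1) rf[OF gR]]]] idem gR by (simp add: add_idempotent_def)
    obtain p where p: "p\<in>{f,g}" "p \<noteq> ?j"
    proof (cases "f = ?j")
      case True then show ?thesis using that[of g] fg(2) by auto
    next
      case False then show ?thesis using that[of f] by auto
    qed
    have pj: "(p, ?j) \<in> \<rho>" using p j1 j2 by auto
    have pR: "p\<in>R" using p fR gR by auto
    have ple: "\<forall>x\<in>L. le (p x) (?j x)" using p fR gR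
      by (auto simp: jm_app J_ub1 J_ub2 R_app)
    obtain x where x: "x\<in>L" "p x \<noteq> ?j x"
      using p(2) extensionalityI[OF R_ext[OF pR] jm_ext] by blast
    let ?u = "p x" and ?v = "?j x"
    have uv: "?u\<in>L" "?v\<in>L" "le ?u ?v" "?u \<noteq> ?v" using x ple pR fR gR R_app J_in jm_app by auto
    have cuv: "(const_map L ?u, const_map L ?v) \<in> \<rho>"
      using cp[OF pj rf[OF constR[OF x(1)]]] comp_const pR x R_cl fR gR by auto
    have step: "\<exists>d\<in>L. le c d \<and> d \<noteq> c \<and> (const_map L c, const_map L d) \<in> \<rho>"
      if c: "c\<in>L" "c \<noteq> one" for c
    proof -
      obtain h where h: "h\<in>R" "\<forall>y\<in>L. (le y ?u \<longrightarrow> h y = c) \<and> (\<not> le y ?u \<longrightarrow> le c (h y) \<and> h y \<noteq> c)"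
        using sep[OF uv(1) c] by blast
      have hu: "h ?u = c" using h uv rfl by auto
      have nvu: "\<not> le ?v ?u" using asym uv by auto
      have hv: "le c (h ?v) \<and> h ?v \<noteq> c" using h uv nvu by auto
      have "(compose L h (const_map L ?u), compose L h (const_map L ?v)) \<in> \<rho>"
        using cp[OF rf[OF h(1)] cuv] by auto
      then have "(const_map L c, const_map L (h ?v)) \<in> \<rho>" using comp_const h uv hu by auto
      then show ?thesis using hv R_app h uv by auto
    qed
    have allone: "\<forall>c. c\<in>L \<longrightarrow> (const_map L c, const_map L one) \<in> \<rho>"
    proof (rule allI)
      fix c show "c\<in>L \<longrightarrow> (const_map L c, const_map L one) \<in> \<rho>"
      proof (induction c rule: measure_induct_rule[where f="\<lambda>c. card {e\<in>L. le c e}"])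
        case (less c)
        show ?case
        proof
          assume cL: "c\<in>L"
          show "(const_map L c, const_map L one) \<in> \<rho>"
          proof (cases "c = one")
            case True then show ?thesis using rf constR one by auto
          next
            case False
            then obtain d where d: "d\<in>L" "le c d" "d\<noteq>c" "(const_map L c, const_map L d) \<in> \<rho>"
              using step cL by blast
            have "{e\<in>L. le d e} \<subset> {e\<in>L. le c e}"
            proof
              show "{e\<in>L. le d e} \<subseteq> {e\<in>L. le c e}" using trns d cL by blast
              have "c \<in> {e\<in>L. le c e}" using cL rfl by auto
              moreover have "c \<notin> {e\<in>L. le d e}" using asym d cL by auto
              ultimately show "{e\<in>L. le d e} \<noteq> {e\<in>L. le c e}" by blast
            qed
            then have "card {e\<in>L. le d e} < card {e\<in>L. le c e}" by (rule psubset_card_mono[OF finite_subset[OF _ finL], rotated]) auto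
            then have "(const_map L d, const_map L one) \<in> \<rho>" using less d by auto
            then show ?thesis using tr d by blast
          qed
        qed
      qed
    qed
    have fone: "(f', const_map L one) \<in> \<rho>" if f': "f'\<in>R" for f'
    proof -
      obtain a where a: "a\<in>L" "\<forall>x\<in>L. le a (f' x)" using lowb f' by blast
      have "(jm_join L le f' (const_map L a), jm_join L le f' (const_map L one)) \<in> \<rho>"
        using cp[OF rf[OF f'] allone[rule_format, OF a(1)]] by auto
      moreover have "jm_join L le f' (const_map L a) = f'"
        by (rule extensionalityI[OF jm_ext R_ext[OF f']]) (simp add: jm_app c_app J_comm a R_app f' J_eq)
      moreover have "jm_join L le f' (const_map L one) = const_map L one"
        by (rule extensionalityI[OF jm_ext c_ext]) (simp add: jm_app c_app R_app f' J_eq one)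
      ultimately show ?thesis by simp
    qed
    have "\<rho> = R \<times> R"
    proof (rule equalityI)
      show "\<rho> \<subseteq> R \<times> R" by (rule sub)
      show "R \<times> R \<subseteq> \<rho>"
      proof
        fix p assume "p \<in> R \<times> R"
        then obtain x y where xy: "p = (x,y)" "x\<in>R" "y\<in>R" by blast
        have "(x, const_map L one) \<in> \<rho>" "(const_map L one, y) \<in> \<rho>" using fone sy xy by auto
        then show "p \<in> \<rho>" using tr xy(1) by blast
      qed
    qed
    then show ?thesis by simp
  qed
qed

lemma dir1: "finite R \<and> simple_semiring R (jm_join L le) (compose L) \<and> add_idempotent R (jm_join L le)
   \<and> (\<exists>g. greatest_elem R (jm_join L le) g \<and> left_absorbing R (compose L) g \<and> \<not> right_absorbing R (compose L) g)"
  using finR simple idem greatest by blast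

end



locale d2 =
  fixes S :: "'a set" and add mul g
  assumes sr: "semiring_on S add mul"
    and smp: "\<forall>\<rho>. semiring_congruence S add mul \<rho> \<longrightarrow> \<rho> = Id_on S \<or> \<rho> = S \<times> S"
    and idm: "\<forall>x\<in>S. add x x = x"
    and gS: "g\<in>S" and gmax: "\<forall>x\<in>S. add x g = g"
    and labs: "\<forall>s\<in>S. mul g s = g"
    and nra: "\<exists>s\<in>S. mul s g \<noteq> g"
    and finS: "finite S" and cardS: "card S > 2"
begin

abbreviation lq where "lq x y \<equiv> add x y = y"

lemma cl: "x\<in>S \<Longrightarrow> y\<in>S \<Longrightarrow> add x y \<in> S" "x\<in>S \<Longrightarrow> y\<in>S \<Longrightarrow> mul x y \<in> S"
  using sr by (auto simp: semiring_on_def)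
lemma aa: "x\<in>S \<Longrightarrow> y\<in>S \<Longrightarrow> z\<in>S \<Longrightarrow> add (add x y) z = add x (add y z)"
  using sr by (auto simp: semiring_on_def)
lemma ac: "x\<in>S \<Longrightarrow> y\<in>S \<Longrightarrow> add x y = add y x"
  using sr by (auto simp: semiring_on_def)
lemma ma: "x\<in>S \<Longrightarrow> y\<in>S \<Longrightarrow> z\<in>S \<Longrightarrow> mul (mul x y) z = mul x (mul y z)"
  using sr by (auto simp: semiring_on_def)
lemma dl: "x\<in>S \<Longrightarrow> y\<in>S \<Longrightarrow> z\<in>S \<Longrightarrow> mul x (add y z) = add (mul x y) (mul x z)"
  using sr by (auto simp: semiring_on_def)
lemma dr: "x\<in>S \<Longrightarrow> y\<in>S \<Longrightarrow> z\<in>S \<Longrightarrow> mul (add x y) z = add (mul x z) (mul y z)"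
  using sr by (auto simp: semiring_on_def)
lemma id1: "x\<in>S \<Longrightarrow> add x x = x" using idm by auto

lemma lq_antisym: "x\<in>S \<Longrightarrow> y\<in>S \<Longrightarrow> lq x y \<Longrightarrow> lq y x \<Longrightarrow> x = y" using ac by metis
lemma lq_trans: "x\<in>S \<Longrightarrow> y\<in>S \<Longrightarrow> z\<in>S \<Longrightarrow> lq x y \<Longrightarrow> lq y z \<Longrightarrow> lq x z" using aa by metis
lemma ub1: "x\<in>S \<Longrightarrow> y\<in>S \<Longrightarrow> lq x (add x y)" using aa id1 by metis
lemma ub2: "x\<in>S \<Longrightarrow> y\<in>S \<Longrightarrow> lq y (add x y)" using ub1 ac by metis
lemma add_lq: assumes "x\<in>S" "y\<in>S" "b\<in>S" shows "lq (add x y) b \<longleftrightarrow> lq x b \<and> lq y b"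
proof
  assume h: "lq (add x y) b"
  show "lq x b \<and> lq y b" using lq_trans[OF _ cl(1) _ ub1 h] lq_trans[OF _ cl(1) _ ub2 h] assms by auto
next
  assume "lq x b \<and> lq y b" then show "lq (add x y) b" using aa assms by metis
qed
lemma monl: "x\<in>S \<Longrightarrow> y\<in>S \<Longrightarrow> z\<in>S \<Longrightarrow> lq x y \<Longrightarrow> lq (mul z x) (mul z y)"
  using dl ub1 cl by metis
lemma monr: "x\<in>S \<Longrightarrow> y\<in>S \<Longrightarrow> z\<in>S \<Longrightarrow> lq x y \<Longrightarrow> lq (mul x z) (mul y z)"
  using dr ub1 cl by metis

definition L0 where "L0 = (\<lambda>s. mul s g) ` S"
lemma L0S: "y\<in>L0 \<Longrightarrow> y\<in>S" using cl gS by (auto simp: L0_def)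
lemma L0abs: "y\<in>L0 \<Longrightarrow> z\<in>S \<Longrightarrow> mul y z = y"
  using ma labs gS cl by (auto simp: L0_def)
lemma gL0: "g\<in>L0" using labs gS L0_def by (metis image_eqI)
lemma L0add: "x\<in>L0 \<Longrightarrow> y\<in>L0 \<Longrightarrow> add x y \<in> L0"
proof -
  assume "x\<in>L0" "y\<in>L0"
  then obtain s t where "s\<in>S" "t\<in>S" "x = mul s g" "y = mul t g" by (auto simp: L0_def)
  then show ?thesis using dr gS cl unfolding L0_def by (metis image_eqI)
qed
lemma L0mul: "s\<in>S \<Longrightarrow> y\<in>L0 \<Longrightarrow> mul s y \<in> L0"
proof -
  assume "s\<in>S" "y\<in>L0"
  then obtain t where "t\<in>S" "y = mul t g" by (auto simp: L0_def)
  then show ?thesis using ma gS cl \<open>s\<in>S\<close> unfolding L0_def by (metis image_eqI)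
qed

lemma simple_rel:
  assumes r: "\<And>s. s\<in>S \<Longrightarrow> P s s"
    and sy: "\<And>s t. s\<in>S \<Longrightarrow> t\<in>S \<Longrightarrow> P s t \<Longrightarrow> P t s"
    and tr: "\<And>s t u. s\<in>S \<Longrightarrow> t\<in>S \<Longrightarrow> u\<in>S \<Longrightarrow> P s t \<Longrightarrow> P t u \<Longrightarrow> P s u"
    and cp: "\<And>x y u v. x\<in>S \<Longrightarrow> y\<in>S \<Longrightarrow> u\<in>S \<Longrightarrow> v\<in>S \<Longrightarrow> P x y \<Longrightarrow> P u v
               \<Longrightarrow> P (add x u) (add y v) \<and> P (mul x u) (mul y v)"
  shows "(\<forall>s\<in>S. \<forall>t\<in>S. P s t \<longrightarrow> s = t) \<or> (\<forall>s\<in>S. \<forall>t\<in>S. P s t)"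
proof -
  define \<rho> where "\<rho> = {(s,t). s\<in>S \<and> t\<in>S \<and> P s t}"
  have "equiv S \<rho>" unfolding equiv_def refl_on_def sym_def trans_def \<rho>_def
    using r sy tr by blast
  moreover have "\<forall>x y u v. (x, y) \<in> \<rho> \<longrightarrow> (u, v) \<in> \<rho> \<longrightarrow>
           (add x u, add y v) \<in> \<rho> \<and> (mul x u, mul y v) \<in> \<rho>"
    unfolding \<rho>_def using cp cl by auto
  ultimately have "\<rho> = Id_on S \<or> \<rho> = S \<times> S" using smp by (simp add: semiring_congruence_def)
  then show ?thesis unfolding \<rho>_def Id_on_def by blast
qed

lemma kernel_inj: assumes "s\<in>S" "t\<in>S" "\<forall>x\<in>L0. mul s x = mul t x" shows "s = t"
proof -
  have "(\<forall>s\<in>S. \<forall>t\<in>S. (\<forall>x\<in>L0. mul s x = mul t x) \<longrightarrow> s = t) \<or> (\<forall>s\<in>S. \<forall>t\<in>S. (\<forall>x\<in>L0. mul s x = mul t x))"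
  proof (rule simple_rel)
    fix x y u v assume h: "x\<in>S" "y\<in>S" "u\<in>S" "v\<in>S" "\<forall>z\<in>L0. mul x z = mul y z" "\<forall>z\<in>L0. mul u z = mul v z"
    show "(\<forall>z\<in>L0. mul (add x u) z = mul (add y v) z) \<and> (\<forall>z\<in>L0. mul (mul x u) z = mul (mul y v) z)"
      using h dr ma L0S L0mul by simp
  qed auto
  moreover have "\<not> (\<forall>s\<in>S. \<forall>t\<in>S. (\<forall>x\<in>L0. mul s x = mul t x))"
  proof
    assume "\<forall>s\<in>S. \<forall>t\<in>S. (\<forall>x\<in>L0. mul s x = mul t x)"
    then have "\<forall>s\<in>S. mul s g = mul g g" using gS gL0 by blast
    then show False using nra labs gS by auto
  qed
  ultimately show ?thesis using assms by blast
qed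

definition I where "I = {s\<in>S. \<exists>a\<in>L0. \<forall>x\<in>L0. lq a (mul s x)}"

lemma I_closed: assumes "s\<in>I" "t\<in>S"
  shows "add s t \<in> I" "add t s \<in> I" "mul s t \<in> I" "mul t s \<in> I"
proof -
  obtain a where a: "s\<in>S" "a\<in>L0" "\<forall>x\<in>L0. lq a (mul s x)" using assms(1) unfolding I_def by blast
  have aS: "a\<in>S" using a L0S by blast
  have st: "add s t \<in> S" "mul s t \<in> S" "mul t s \<in> S" "add t s \<in> S" using cl a(1) assms(2) by auto
  have "\<forall>x\<in>L0. lq a (mul (add s t) x)"
  proof
    fix x assume x: "x\<in>L0"
    have xS: "x\<in>S" using x L0S by blast
    have e: "mul (add s t) x = add (mul s x) (mul t x)" using dr[OF a(1) assms(2) xS] .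
    have "lq (mul s x) (add (mul s x) (mul t x))" using ub1 cl(2)[OF a(1) xS] cl(2)[OF assms(2) xS] by blast
    then show "lq a (mul (add s t) x)" unfolding e
      using lq_trans[OF aS cl(2)[OF a(1) xS] cl(1)[OF cl(2)[OF a(1) xS] cl(2)[OF assms(2) xS]]] a(3) x by blast
  qed
  then show as: "add s t \<in> I" using a(2) st(1) unfolding I_def by blast
  then show "add t s \<in> I" using ac[OF a(1) assms(2)] by simp
  have "\<forall>x\<in>L0. lq a (mul (mul s t) x)"
  proof
    fix x assume x: "x\<in>L0"
    have xS: "x\<in>S" using x L0S by blast
    show "lq a (mul (mul s t) x)" using ma[OF a(1) assms(2) xS] a(3) L0mul[OF assms(2) x] by simp
  qed
  then show "mul s t \<in> I" using a(2) st(2) unfolding I_def by blast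
  have "\<forall>x\<in>L0. lq (mul t a) (mul (mul t s) x)"
  proof
    fix x assume x: "x\<in>L0"
    have xS: "x\<in>S" using x L0S by blast
    show "lq (mul t a) (mul (mul t s) x)" using ma[OF assms(2) a(1) xS]
      monl[OF aS cl(2)[OF a(1) xS] assms(2)] a(3) x by simp
  qed
  then show "mul t s \<in> I" using L0mul[OF assms(2) a(2)] st(3) unfolding I_def by blast
qed

lemma lowb: assumes "s\<in>S" shows "\<exists>a\<in>L0. \<forall>x\<in>L0. lq a (mul s x)"
proof -
  let ?P = "\<lambda>s t. s = t \<or> (s\<in>I \<and> t\<in>I)"
  have "(\<forall>s\<in>S. \<forall>t\<in>S. ?P s t \<longrightarrow> s = t) \<or> (\<forall>s\<in>S. \<forall>t\<in>S. ?P s t)"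
  proof (rule simple_rel)
    fix x y u v assume h: "x\<in>S" "y\<in>S" "u\<in>S" "v\<in>S" "?P x y" "?P u v"
    show "?P (add x u) (add y v) \<and> ?P (mul x u) (mul y v)"
    proof (cases "x = y \<and> u = v")
      case True then show ?thesis by simp
    next
      case False
      then have "(x\<in>I \<and> y\<in>I) \<or> (u\<in>I \<and> v\<in>I)" using h by blast
      then show ?thesis
      proof
        assume "x\<in>I \<and> y\<in>I" then show ?thesis using I_closed(1,3) h(3,4) by blast
      next
        assume "u\<in>I \<and> v\<in>I" then show ?thesis using I_closed(2,4) h(1,2) by blast
      qed
    qed
  qed (simp, blast, blast)
  moreover obtain s0 where s0: "s0\<in>S" "mul s0 g \<noteq> g" using nra by blast
  have gI: "g\<in>I"
  proof -
    have "\<forall>x\<in>L0. lq g (mul g x)" using labs L0S id1[OF gS] by simp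
    then show ?thesis unfolding I_def using gS gL0 by blast
  qed
  have bL: "mul s0 g \<in> L0" using L0mul[OF s0(1) gL0] .
  have bI: "mul s0 g \<in> I"
  proof -
    have "\<forall>x\<in>L0. lq (mul s0 g) (mul (mul s0 g) x)" using L0abs[OF bL] L0S id1[OF L0S[OF bL]] by simp
    then show ?thesis unfolding I_def using bL L0S by blast
  qed
  moreover have "\<not> (\<forall>s\<in>S. \<forall>t\<in>S. ?P s t \<longrightarrow> s = t)"
  proof
    assume "\<forall>s\<in>S. \<forall>t\<in>S. ?P s t \<longrightarrow> s = t"
    then have "mul s0 g = g" using L0S[OF bL] gS bI gI by blast
    then show False using s0(2) by simp
  qed
  ultimately have "\<forall>s\<in>S. \<forall>t\<in>S. ?P s t" by blast
  then have "s = g \<or> (s\<in>I \<and> g\<in>I)" using assms gS by blast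
  then have "s\<in>I" using gI by auto
  then show ?thesis unfolding I_def by blast
qed

lemma three: "\<exists>x\<in>S. \<exists>y\<in>S. \<exists>z\<in>S. x\<noteq>y \<and> x\<noteq>z \<and> y\<noteq>z"
proof -
  obtain x where x: "x\<in>S" using cardS by fastforce
  have "card (S - {x}) > 1" using x cardS finS by auto
  then have "S - {x} \<noteq> {}" by (metis card.empty not_less_zero)
  then obtain y where y: "y\<in>S - {x}" by blast
  have "card (S - {x} - {y}) > 0" using x y cardS finS by auto
  then have "S - {x} - {y} \<noteq> {}" by (metis card.empty less_irrefl)
  then obtain z where z: "z\<in>S - {x} - {y}" by blast
  show ?thesis using x y z by blast
qed

lemma tau_id: assumes b: "b\<in>L0" "b\<noteq>g"
  shows "\<forall>s\<in>S. \<forall>t\<in>S. (\<forall>u\<in>S. \<forall>y\<in>L0. lq (mul u (mul s y)) b \<longleftrightarrow> lq (mul u (mul t y)) b) \<longrightarrow> s = t"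
proof -
  have bS: "b\<in>S" using b L0S by auto
  let ?P = "\<lambda>s t. \<forall>u\<in>S. \<forall>y\<in>L0. lq (mul u (mul s y)) b \<longleftrightarrow> lq (mul u (mul t y)) b"
  have "(\<forall>s\<in>S. \<forall>t\<in>S. ?P s t \<longrightarrow> s = t) \<or> (\<forall>s\<in>S. \<forall>t\<in>S. ?P s t)"
  proof (rule simple_rel)
    fix x y u v assume h: "x\<in>S" "y\<in>S" "u\<in>S" "v\<in>S" "?P x y" "?P u v"
    show "?P (add x u) (add y v) \<and> ?P (mul x u) (mul y v)"
    proof
      show "?P (add x u) (add y v)"
      proof (intro ballI)
        fix w z assume wz: "w\<in>S" "z\<in>L0"
        have zS: "z\<in>S" using wz L0S by auto
        have e1: "mul w (mul (add x u) z) = add (mul w (mul x z)) (mul w (mul u z))"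
          using dr dl h zS wz cl by auto
        have e2: "mul w (mul (add y v) z) = add (mul w (mul y z)) (mul w (mul v z))"
          using dr dl h zS wz cl by auto
        show "lq (mul w (mul (add x u) z)) b \<longleftrightarrow> lq (mul w (mul (add y v) z)) b"
        proof -
          have 1: "lq (mul w (mul (add x u) z)) b \<longleftrightarrow> lq (mul w (mul x z)) b \<and> lq (mul w (mul u z)) b"
            unfolding e1 by (rule add_lq) (use cl h zS wz bS in auto)
          have 2: "lq (mul w (mul (add y v) z)) b \<longleftrightarrow> lq (mul w (mul y z)) b \<and> lq (mul w (mul v z)) b"
            unfolding e2 by (rule add_lq) (use cl h zS wz bS in auto)
          show ?thesis unfolding 1 2 using h(5,6) wz by auto
        qed
      qed
      show "?P (mul x u) (mul y v)"
      proof (intro ballI)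
        fix w z assume wz: "w\<in>S" "z\<in>L0"
        have zS: "z\<in>S" using wz L0S by auto
        have "lq (mul w (mul (mul x u) z)) b \<longleftrightarrow> lq (mul w (mul x (mul u z))) b" using ma h zS by auto
        also have "\<dots> \<longleftrightarrow> lq (mul w (mul y (mul u z))) b" using h(5) wz L0mul h by auto
        also have "\<dots> \<longleftrightarrow> lq (mul (mul w y) (mul u z)) b" using ma h wz zS cl by auto
        also have "\<dots> \<longleftrightarrow> lq (mul (mul w y) (mul v z)) b" using h(6) wz cl h by auto
        also have "\<dots> \<longleftrightarrow> lq (mul w (mul (mul y v) z)) b" using ma h wz zS cl by auto
        finally show "lq (mul w (mul (mul x u) z)) b \<longleftrightarrow> lq (mul w (mul (mul y v) z)) b" .
      qed
    qed
  qed (simp, blast, blast)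
  moreover have "\<not> (\<forall>s\<in>S. \<forall>t\<in>S. ?P s t)"
  proof
    assume F: "\<forall>s\<in>S. \<forall>t\<in>S. ?P s t"
    have F1: "lq (mul w (mul s g)) b \<longleftrightarrow> lq (mul w g) b" if "w\<in>S" "s\<in>S" for w s
      using F[rule_format, OF that(2) gS that(1) gL0] labs gS by simp
    let ?Q = "\<lambda>s t. lq (mul s g) b \<longleftrightarrow> lq (mul t g) b"
    have "(\<forall>s\<in>S. \<forall>t\<in>S. ?Q s t \<longrightarrow> s = t) \<or> (\<forall>s\<in>S. \<forall>t\<in>S. ?Q s t)"
    proof (rule simple_rel)
      fix x y u v assume h: "x\<in>S" "y\<in>S" "u\<in>S" "v\<in>S" "?Q x y" "?Q u v"
      show "?Q (add x u) (add y v) \<and> ?Q (mul x u) (mul y v)"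
      proof
        have 1: "lq (mul (add x u) g) b \<longleftrightarrow> lq (mul x g) b \<and> lq (mul u g) b"
          unfolding dr[OF h(1,3) gS] by (rule add_lq) (use cl h gS bS in auto)
        have 2: "lq (mul (add y v) g) b \<longleftrightarrow> lq (mul y g) b \<and> lq (mul v g) b"
          unfolding dr[OF h(2,4) gS] by (rule add_lq) (use cl h gS bS in auto)
        show "?Q (add x u) (add y v)" unfolding 1 2 using h(5,6) by auto
        have "lq (mul (mul x u) g) b \<longleftrightarrow> lq (mul x g) b" using ma F1 h gS by auto
        moreover have "lq (mul (mul y v) g) b \<longleftrightarrow> lq (mul y g) b" using ma F1 h gS by auto
        ultimately show "?Q (mul x u) (mul y v)" using h by auto
      qed
    qed auto
    moreover have "\<not> ?Q b g"
    proof
      assume "?Q b g"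
      then have "lq g b" using L0abs b gS id1 bS labs by auto
      then show False using gmax bS ac gS b by metis
    qed
    ultimately have Qid: "\<forall>s\<in>S. \<forall>t\<in>S. ?Q s t \<longrightarrow> s = t" using bS gS by blast
    obtain x y z where xyz: "x\<in>S" "y\<in>S" "z\<in>S" "x\<noteq>y" "x\<noteq>z" "y\<noteq>z" using three by blast
    have "?Q x y \<or> ?Q x z \<or> ?Q y z" by blast
    then show False using Qid xyz by blast
  qed
  ultimately show ?thesis by blast
qed

lemma sep0: assumes "a\<in>L0" "x\<in>L0" "b\<in>L0" "b\<noteq>g" "\<not> lq x a"
  shows "\<exists>u\<in>S. lq (mul u a) b \<and> \<not> lq (mul u x) b"
proof -
  have S3: "a\<in>S" "x\<in>S" "b\<in>S" using assms L0S by auto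
  have ne: "a \<noteq> add a x" using ac[OF S3(1,2)] assms(5) by auto
  have axL: "add a x \<in> L0" using L0add assms by auto
  have axS: "add a x \<in> S" using axL L0S by blast
  have "\<not> (\<forall>u\<in>S. \<forall>y\<in>L0. lq (mul u (mul a y)) b \<longleftrightarrow> lq (mul u (mul (add a x) y)) b)"
    using tau_id[OF assms(3,4), rule_format, OF S3(1) axS] ne by blast
  then obtain u y where uy: "u\<in>S" "y\<in>L0" "\<not> (lq (mul u (mul a y)) b \<longleftrightarrow> lq (mul u (mul (add a x) y)) b)"
    by blast
  have yS: "y\<in>S" using uy L0S by auto
  have e: "mul u (mul (add a x) y) = add (mul u a) (mul u x)"
    using L0abs[OF axL yS] dl[OF uy(1) S3(1,2)] by simp
  have n: "\<not> (lq (mul u a) b \<longleftrightarrow> lq (add (mul u a) (mul u x)) b)"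
    using uy(3) unfolding e L0abs[OF assms(1) yS] .
  have "lq (add (mul u a) (mul u x)) b \<longleftrightarrow> lq (mul u a) b \<and> lq (mul u x) b"
    by (rule add_lq) (use cl(2) uy(1) S3 in auto)
  then show ?thesis using n uy(1) by blast
qed

lemma sep: assumes a: "a\<in>L0" and b: "b\<in>L0" "b\<noteq>g"
  shows "\<exists>s\<in>S. \<forall>x\<in>L0. (lq x a \<longrightarrow> mul s x = b) \<and> (\<not> lq x a \<longrightarrow> lq b (mul s x) \<and> mul s x \<noteq> b)"
proof -
  have aS: "a\<in>S" and bS: "b\<in>S" using a b L0S by auto
  have fin: "finite {x\<in>L0. \<not> lq x a}" by (rule finite_subset[OF _ finS]) (use L0S in blast)
  have "X \<subseteq> {x\<in>L0. \<not> lq x a} \<longrightarrow> (\<exists>t\<in>S. lq (mul t a) b \<and> (\<forall>x\<in>X. \<not> lq (mul t x) b))"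
    if "finite X" for X
    using that
  proof (induction X rule: finite_induct)
    case empty
    then show ?case using bS L0abs[OF b(1) aS] id1 by (intro impI bexI[of _ b]) auto
  next
    case (insert x X)
    show ?case
    proof
      assume sub: "insert x X \<subseteq> {x\<in>L0. \<not> lq x a}"
      then obtain t where t: "t\<in>S" "lq (mul t a) b" "\<forall>x\<in>X. \<not> lq (mul t x) b" using insert by auto
      obtain u where u: "u\<in>S" "lq (mul u a) b" "\<not> lq (mul u x) b" using sep0[OF a _ b] sub by auto
      have xX: "\<forall>z\<in>insert x X. z\<in>S" using sub L0S by auto
      have "lq (mul (add t u) a) b" unfolding dr[OF t(1) u(1) aS]
        using add_lq[OF cl(2)[OF t(1) aS] cl(2)[OF u(1) aS] bS] t(2) u(2) by simp
      moreover have "\<forall>z\<in>insert x X. \<not> lq (mul (add t u) z) b"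
      proof
        fix z assume z: "z\<in>insert x X"
        have "mul (add t u) z = add (mul t z) (mul u z)" using dr t u xX z by auto
        moreover have "\<not> lq (mul t z) b \<or> \<not> lq (mul u z) b" using t(3) u(3) z by auto
        moreover have "z\<in>S" using xX z by auto
        ultimately show "\<not> lq (mul (add t u) z) b"
          using add_lq[OF cl(2)[OF t(1)] cl(2)[OF u(1)] bS] by simp
      qed
      ultimately show "\<exists>t\<in>S. lq (mul t a) b \<and> (\<forall>x\<in>insert x X. \<not> lq (mul t x) b)"
        using cl t u by blast
    qed
  qed
  then obtain t where t: "t\<in>S" "lq (mul t a) b" "\<forall>x\<in>{x\<in>L0. \<not> lq x a}. \<not> lq (mul t x) b"
    using fin by blast
  show ?thesis
  proof (intro bexI ballI conjI impI)
    fix x assume x: "x\<in>L0"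
    have xS: "x\<in>S" using x L0S by auto
    have e: "mul (add b t) x = add b (mul t x)" using dr bS t xS L0abs[OF b(1) xS] by auto
    {
      assume "lq x a"
      then have "lq (mul t x) (mul t a)" using monl xS aS t by auto
      then have "lq (mul t x) b" using lq_trans[OF cl(2)[OF t(1) xS] cl(2)[OF t(1) aS] bS _ t(2)] by simp
      then show "mul (add b t) x = b" using e ac[OF bS cl(2)[OF t(1) xS]] by simp
    }
    assume n: "\<not> lq x a"
    then have nt: "\<not> lq (mul t x) b" using t x by auto
    show "lq b (mul (add b t) x)" using e ub1[OF bS cl(2)[OF t(1) xS]] by simp
    show "mul (add b t) x \<noteq> b" using e nt ac[OF bS cl(2)[OF t(1) xS]] by simp
  qed (rule cl(1)[OF bS t(1)])
qed

lemma L0two: "\<exists>b\<in>L0. b \<noteq> g"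
proof -
  obtain s where "s\<in>S" "mul s g \<noteq> g" using nra by blast
  then show ?thesis unfolding L0_def by blast
qed

lemma gtop: "x\<in>S \<Longrightarrow> lq x g" using gmax by auto

end



lemma lub_unique_gen: assumes js: "join_semilattice L le" and "x\<in>L" "y\<in>L" "is_lub L le x y z"
  shows "sl_join L le x y = z"
proof -
  have as: "\<forall>x\<in>L. \<forall>y\<in>L. le x y \<and> le y x \<longrightarrow> x = y" using js unfolding join_semilattice_def by blast
  have "\<And>z'. is_lub L le x y z' \<Longrightarrow> z' = z"
  proof -
    fix z' assume z': "is_lub L le x y z'"
    have "z\<in>L" "z'\<in>L" "le z z'" "le z' z" using z' assms(4) unfolding is_lub_def by auto
    then show "z' = z" using as by blast
  qed
  then show ?thesis unfolding sl_join_def using assms(4) by (rule the_equality[rotated])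
qed

locale d2n = d2 +
  fixes \<phi> :: "'a \<Rightarrow> nat"
  assumes inj: "inj_on \<phi> S"
begin

definition \<psi> where "\<psi> = the_inv_into S \<phi>"
definition LL where "LL = \<phi> ` L0"
definition le where "le i j \<longleftrightarrow> add (\<psi> i) (\<psi> j) = \<psi> j"
definition H where "H s = (\<lambda>i\<in>LL. \<phi> (mul s (\<psi> i)))"
definition RR where "RR = H ` S"

lemma psi_phi: "x\<in>S \<Longrightarrow> \<psi> (\<phi> x) = x" unfolding \<psi>_def using the_inv_into_f_f[OF inj] by blast
lemma P1: "i\<in>LL \<Longrightarrow> \<psi> i \<in> L0 \<and> \<phi> (\<psi> i) = i" unfolding LL_def using psi_phi L0S by auto
lemma P2: "x\<in>L0 \<Longrightarrow> \<phi> x \<in> LL" unfolding LL_def by blast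
lemma le_phi: "x\<in>L0 \<Longrightarrow> y\<in>L0 \<Longrightarrow> le (\<phi> x) (\<phi> y) \<longleftrightarrow> lq x y" unfolding le_def using psi_phi L0S by simp
lemma phi_eq: "x\<in>S \<Longrightarrow> y\<in>S \<Longrightarrow> \<phi> x = \<phi> y \<longleftrightarrow> x = y" using inj inj_on_def by metis

lemma js: "join_semilattice LL le"
  unfolding join_semilattice_def
proof (intro conjI ballI impI)
  fix i assume i: "i\<in>LL"
  have "\<psi> i \<in> S" using P1[OF i] L0S by blast
  then show "le i i" unfolding le_def using id1 by blast
next
  fix i j assume ij: "i\<in>LL" "j\<in>LL" "le i j \<and> le j i"
  have pi: "\<psi> i \<in> L0" "\<phi> (\<psi> i) = i" "\<psi> j \<in> L0" "\<phi> (\<psi> j) = j" using P1 ij(1,2) by auto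
  have "\<psi> i = \<psi> j" using lq_antisym[OF L0S[OF pi(1)] L0S[OF pi(3)]] ij(3) unfolding le_def by blast
  then show "i = j" using pi(2,4) by metis
next
  fix i j k assume ij: "i\<in>LL" "j\<in>LL" "k\<in>LL" "le i j \<and> le j k"
  have "\<psi> i \<in> S" "\<psi> j \<in> S" "\<psi> k \<in> S" using P1 ij(1-3) L0S by auto
  then show "le i k" using lq_trans ij(4) unfolding le_def by blast
next
  fix i j assume ij: "i\<in>LL" "j\<in>LL"
  let ?x = "\<psi> i" and ?y = "\<psi> j"
  have xy: "?x\<in>L0" "?y\<in>L0" "?x\<in>S" "?y\<in>S" using P1 ij L0S by auto
  have zL: "add ?x ?y \<in> L0" using L0add xy by auto
  have pz: "\<psi> (\<phi> (add ?x ?y)) = add ?x ?y" using psi_phi L0S[OF zL] by blast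
  have "is_lub LL le i j (\<phi> (add ?x ?y))"
    unfolding is_lub_def le_def pz
  proof (intro conjI ballI impI)
    show "\<phi> (add ?x ?y) \<in> LL" using P2 zL by blast
    show "lq ?x (add ?x ?y)" using ub1 xy by blast
    show "lq ?y (add ?x ?y)" using ub2 xy by blast
    fix w assume w: "w\<in>LL" "lq ?x (\<psi> w) \<and> lq ?y (\<psi> w)"
    have wS: "\<psi> w \<in> S" using P1[OF w(1)] L0S by blast
    show "lq (add ?x ?y) (\<psi> w)" using add_lq[OF xy(3,4) wS] w(2) by blast
  qed
  then show "\<exists>z. is_lub LL le i j z" by blast
qed

lemma SL: assumes "x\<in>L0" "y\<in>L0" shows "sl_join LL le (\<phi> x) (\<phi> y) = \<phi> (add x y)"
proof (rule lub_unique_gen[OF js P2[OF assms(1)] P2[OF assms(2)]])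
  have zL: "add x y \<in> L0" using L0add assms by auto
  have xy: "x\<in>S" "y\<in>S" using assms L0S by auto
  show "is_lub LL le (\<phi> x) (\<phi> y) (\<phi> (add x y))"
    unfolding is_lub_def
  proof (intro conjI ballI impI)
    show "\<phi> (add x y) \<in> LL" using P2 zL by blast
    show "le (\<phi> x) (\<phi> (add x y))" unfolding le_phi[OF assms(1) zL] by (rule ub1[OF xy])
    show "le (\<phi> y) (\<phi> (add x y))" unfolding le_phi[OF assms(2) zL] by (rule ub2[OF xy])
    fix w assume w: "w\<in>LL" "le (\<phi> x) w \<and> le (\<phi> y) w"
    then obtain v where v: "v\<in>L0" "w = \<phi> v" unfolding LL_def by blast
    have vS: "v\<in>S" using v L0S by blast
    have "lq x v" "lq y v" using w(2) unfolding v(2) le_phi[OF assms(1) v(1)] le_phi[OF assms(2) v(1)] by auto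
    then show "le (\<phi> (add x y)) w" unfolding v(2) le_phi[OF zL v(1)] using add_lq[OF xy vS] by blast
  qed
qed

lemma H_app: "i\<in>LL \<Longrightarrow> H s i = \<phi> (mul s (\<psi> i))" by (simp add: H_def)
lemma H_ext: "H s \<in> extensional LL" by (simp add: H_def)
lemma H_phi: "x\<in>L0 \<Longrightarrow> H s (\<phi> x) = \<phi> (mul s x)" using H_app P2 psi_phi L0S by simp

lemma H_add: "s\<in>S \<Longrightarrow> t\<in>S \<Longrightarrow> H (add s t) = jm_join LL le (H s) (H t)"
proof (rule extensionalityI[OF H_ext])
  show "jm_join LL le (H s) (H t) \<in> extensional LL" by (simp add: jm_join_def)
  fix i assume st: "s\<in>S" "t\<in>S" and i: "i\<in>LL"
  obtain x where x: "x\<in>L0" "i = \<phi> x" using i LL_def by blast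
  have xS: "x\<in>S" using x L0S by blast
  show "H (add s t) i = jm_join LL le (H s) (H t) i"
  proof -
    have "jm_join LL le (H s) (H t) (\<phi> x) = sl_join LL le (H s (\<phi> x)) (H t (\<phi> x))"
      using P2[OF x(1)] by (simp add: jm_join_def)
    also have "\<dots> = \<phi> (add (mul s x) (mul t x))"
      unfolding H_phi[OF x(1)] by (rule SL[OF L0mul[OF st(1) x(1)] L0mul[OF st(2) x(1)]])
    also have "\<dots> = H (add s t) (\<phi> x)" unfolding H_phi[OF x(1)] dr[OF st xS] ..
    finally show ?thesis unfolding x(2) by simp
  qed
qed

lemma H_mul: "s\<in>S \<Longrightarrow> t\<in>S \<Longrightarrow> H (mul s t) = compose LL (H s) (H t)"
proof (rule extensionalityI[OF H_ext compose_extensional])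
  fix i assume st: "s\<in>S" "t\<in>S" and i: "i\<in>LL"
  obtain x where x: "x\<in>L0" "i = \<phi> x" using i LL_def by blast
  have xS: "x\<in>S" using x L0S by blast
  show "H (mul s t) i = compose LL (H s) (H t) i"
    unfolding x(2) compose_eq[OF P2[OF x(1)]] H_phi[OF x(1)] H_phi[OF L0mul[OF st(2) x(1)]] ma[OF st xS] ..
qed

lemma H_PiE: assumes s: "s\<in>S" shows "H s \<in> LL \<rightarrow>\<^sub>E LL"
proof -
  have "\<forall>i\<in>LL. \<phi> (mul s (\<psi> i)) \<in> LL" using P1 P2 L0mul[OF s] by blast
  then show ?thesis unfolding H_def by simp
qed

lemma H_JM: assumes s: "s\<in>S" shows "H s \<in> JM LL le"
  unfolding JM_def
proof (intro CollectI conjI ballI)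
  show "H s \<in> LL \<rightarrow>\<^sub>E LL" using H_PiE s by blast
  fix i j assume ij: "i\<in>LL" "j\<in>LL"
  obtain x where x: "x\<in>L0" "i = \<phi> x" using ij LL_def by blast
  obtain y where y: "y\<in>L0" "j = \<phi> y" using ij LL_def by blast
  have xyS: "x\<in>S" "y\<in>S" using x y L0S by auto
  show "H s (sl_join LL le i j) = sl_join LL le (H s i) (H s j)"
    unfolding x(2) y(2) SL[OF x(1) y(1)] H_phi[OF L0add[OF x(1) y(1)]] H_phi[OF x(1)] H_phi[OF y(1)]
      SL[OF L0mul[OF s x(1)] L0mul[OF s y(1)]] dl[OF s xyS] by (rule refl)
qed

lemma inj_H: "inj_on H S"
proof
  fix s t assume st: "s\<in>S" "t\<in>S" "H s = H t"
  have "\<forall>x\<in>L0. mul s x = mul t x"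
  proof
    fix x assume x: "x\<in>L0"
    have "H s (\<phi> x) = H t (\<phi> x)" using st(3) by simp
    then have "\<phi> (mul s x) = \<phi> (mul t x)" by (simp add: H_phi[OF x])
    then show "mul s x = mul t x" using phi_eq[OF cl(2)[OF st(1) L0S[OF x]] cl(2)[OF st(2) L0S[OF x]]] by simp
  qed
  then show "s = t" by (rule kernel_inj[OF st(1,2)])
qed

lemma final: "\<exists>(L :: nat set) le one R h. admissible L le one R
                  \<and> bij_betw h S R
                  \<and> (\<forall>x\<in>S. \<forall>y\<in>S. h (add x y) = jm_join L le (h x) (h y)
                                 \<and> h (mul x y) = compose L (h x) (h y))"
proof (intro exI conjI)
  show "bij_betw H S RR" unfolding RR_def using inj_H by (simp add: bij_betw_def)
  show "\<forall>x\<in>S. \<forall>y\<in>S. H (add x y) = jm_join LL le (H x) (H y) \<and> H (mul x y) = compose LL (H x) (H y)"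
    using H_add H_mul by blast
  show "admissible LL le (\<phi> g) RR"
    unfolding admissible_def
  proof (intro conjI ballI)
    show "join_semilattice LL le" by (rule js)
    show fin: "finite LL" unfolding LL_def using finS L0S by (meson finite_imageI finite_subset subsetI)
    obtain b where b: "b\<in>L0" "b\<noteq>g" using L0two by blast
    have "\<phi> b \<noteq> \<phi> g" using phi_eq b L0S gS by blast
    moreover have "{\<phi> b, \<phi> g} \<subseteq> LL" using P2 b gL0 by blast
    ultimately have "card {\<phi> b, \<phi> g} = 2" "{\<phi> b, \<phi> g} \<subseteq> LL" by simp_all
    then show "card LL \<ge> 2" using card_mono[OF fin] by metis
    show one: "\<phi> g \<in> LL" using P2 gL0 by blast
    fix i assume i: "i\<in>LL"
    have pi: "\<psi> i \<in> L0" "\<phi> (\<psi> i) = i" using P1[OF i] by auto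
    have "le (\<phi> (\<psi> i)) (\<phi> g)" using le_phi[OF pi(1) gL0] gtop L0S[OF pi(1)] by simp
    then show "le i (\<phi> g)" using pi by simp
  next
    show "subsemiring_JM LL le RR"
      unfolding subsemiring_JM_def RR_def
    proof (intro conjI ballI)
      show "H ` S \<noteq> {}" using gS by blast
      show "H ` S \<subseteq> JM LL le" using H_JM by blast
      fix f h assume "f \<in> H ` S" "h \<in> H ` S"
      then obtain s t where "s\<in>S" "t\<in>S" "f = H s" "h = H t" by blast
      then show "jm_join LL le f h \<in> H ` S" "compose LL f h \<in> H ` S"
        using H_add H_mul cl by (metis image_eqI)+
    qed
  next
    fix a assume a: "a\<in>LL"
    have aL: "\<psi> a \<in> L0" "\<phi> (\<psi> a) = a" using P1[OF a] by auto
    have "const_map LL a = H (\<psi> a)"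
    proof (rule extensionalityI[OF _ H_ext])
      show "const_map LL a \<in> extensional LL" by (simp add: const_map_def)
      fix i assume i: "i\<in>LL"
      show "const_map LL a i = H (\<psi> a) i"
        using H_app[OF i] L0abs[OF aL(1)] P1[OF i] L0S aL by (simp add: const_map_def i)
    qed
    then show "const_map LL a \<in> RR" unfolding RR_def using aL L0S by blast
  next
    fix f assume "f\<in>RR"
    then obtain s where s: "s\<in>S" "f = H s" unfolding RR_def by blast
    obtain a where a: "a\<in>L0" "\<forall>x\<in>L0. lq a (mul s x)" using lowb s by blast
    show "\<exists>a\<in>LL. \<forall>x\<in>LL. le a (f x)"
    proof (intro bexI ballI)
      show "\<phi> a \<in> LL" using P2 a by blast
      fix i assume i: "i\<in>LL"
      obtain x where x: "x\<in>L0" "i = \<phi> x" using i LL_def by blast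
      show "le (\<phi> a) (f i)" using s x H_phi le_phi a L0mul by simp
    qed
  next
    fix a b assume a: "a\<in>LL" and b: "b \<in> LL - {\<phi> g}"
    obtain a' where a': "a'\<in>L0" "a = \<phi> a'" using a LL_def by blast
    obtain b' where b': "b'\<in>L0" "b = \<phi> b'" using b LL_def by blast
    have bg: "b' \<noteq> g" using b b' by blast
    obtain s where s: "s\<in>S" "\<forall>x\<in>L0. (lq x a' \<longrightarrow> mul s x = b') \<and> (\<not> lq x a' \<longrightarrow> lq b' (mul s x) \<and> mul s x \<noteq> b')"
      using sep[OF a'(1) b'(1) bg] by blast
    show "\<exists>f\<in>RR. \<forall>x\<in>LL. (le x a \<longrightarrow> f x = b) \<and> (\<not> le x a \<longrightarrow> le b (f x) \<and> f x \<noteq> b)"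
    proof (intro bexI ballI)
      show "H s \<in> RR" unfolding RR_def using s by blast
      fix i assume i: "i\<in>LL"
      obtain x where x: "x\<in>L0" "i = \<phi> x" using i LL_def by blast
      have sx: "mul s x \<in> L0" "mul s x \<in> S" "b'\<in>S" using L0mul s x L0S b' by auto
      show "(le i a \<longrightarrow> H s i = b) \<and> (\<not> le i a \<longrightarrow> le b (H s i) \<and> H s i \<noteq> b)"
        unfolding x(2) a'(2) b'(2) H_phi[OF x(1)] le_phi[OF x(1) a'(1)] le_phi[OF b'(1) sx(1)] phi_eq[OF sx(2) sx(3)]
        using s(2)[rule_format, OF x(1)] by simp
    qed
  qed
qed

end

theorem theorem5p3:
  shows "(\<forall>(L :: 'b set) le one R. admissible L le one R \<longrightarrow>
           finite R
           \<and> simple_semiring R (jm_join L le) (compose L)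
           \<and> add_idempotent R (jm_join L le)
           \<and> (\<exists>g. greatest_elem R (jm_join L le) g
                  \<and> left_absorbing R (compose L) g
                  \<and> \<not> right_absorbing R (compose L) g))
    \<and> (\<forall>(S :: 'a set) add mul.
           finite S \<and> simple_semiring S add mul \<and> add_idempotent S add \<and> card S > 2
           \<and> (\<exists>g. greatest_elem S add g \<and> left_absorbing S mul g \<and> \<not> right_absorbing S mul g)
           \<longrightarrow> (\<exists>(L :: nat set) le one R h. admissible L le one R
                  \<and> bij_betw h S R
                  \<and> (\<forall>x\<in>S. \<forall>y\<in>S. h (add x y) = jm_join L le (h x) (h y)
                                 \<and> h (mul x y) = compose L (h x) (h y))))"
proof (rule conjI)
  show "\<forall>(L :: 'b set) le one R. admissible L le one R \<longrightarrow>
           finite R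
           \<and> simple_semiring R (jm_join L le) (compose L)
           \<and> add_idempotent R (jm_join L le)
           \<and> (\<exists>g. greatest_elem R (jm_join L le) g
                  \<and> left_absorbing R (compose L) g
                  \<and> \<not> right_absorbing R (compose L) g)"
  proof (intro allI impI)
    fix L :: "'b set" and le one R assume A: "admissible L le one R"
    interpret adm L le one R by (rule adm.intro) (rule A)
    show "finite R
           \<and> simple_semiring R (jm_join L le) (compose L)
           \<and> add_idempotent R (jm_join L le)
           \<and> (\<exists>g. greatest_elem R (jm_join L le) g
                  \<and> left_absorbing R (compose L) g
                  \<and> \<not> right_absorbing R (compose L) g)" by (rule dir1)
  qed
next
  show "\<forall>(S :: 'a set) add mul.
           finite S \<and> simple_semiring S add mul \<and> add_idempotent S add \<and> card S > 2
           \<and> (\<exists>g. greatest_elem S add g \<and> left_absorbing S mul g \<and> \<not> right_absorbing S mul g)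
           \<longrightarrow> (\<exists>(L :: nat set) le one R h. admissible L le one R
                  \<and> bij_betw h S R
                  \<and> (\<forall>x\<in>S. \<forall>y\<in>S. h (add x y) = jm_join L le (h x) (h y)
                                 \<and> h (mul x y) = compose L (h x) (h y)))"
  proof (intro allI impI)
    fix S :: "'a set" and add mul
    assume h: "finite S \<and> simple_semiring S add mul \<and> add_idempotent S add \<and> card S > 2
           \<and> (\<exists>g. greatest_elem S add g \<and> left_absorbing S mul g \<and> \<not> right_absorbing S mul g)"
    then obtain g where g: "greatest_elem S add g" "left_absorbing S mul g" "\<not> right_absorbing S mul g" by blast
    obtain \<phi> :: "'a \<Rightarrow> nat" and n where \<phi>: "\<phi> ` S = {i. i < n}" "inj_on \<phi> S"
      using finite_imp_inj_to_nat_seg h by blast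
    interpret d2n S add mul g \<phi>
    proof (unfold_locales)
      show "semiring_on S add mul" using h by (simp add: simple_semiring_def)
      show "\<forall>\<rho>. semiring_congruence S add mul \<rho> \<longrightarrow> \<rho> = Id_on S \<or> \<rho> = S \<times> S"
        using h by (simp add: simple_semiring_def)
      show "\<forall>x\<in>S. add x x = x" using h by (simp add: add_idempotent_def)
      show "g\<in>S" "\<forall>x\<in>S. add x g = g" using g(1) by (auto simp: greatest_elem_def)
      show "\<forall>s\<in>S. mul g s = g" using g(2) by (simp add: left_absorbing_def)
      show "\<exists>s\<in>S. mul s g \<noteq> g" using g(3) by (simp add: right_absorbing_def)
      show "finite S" "card S > 2" using h by auto
      show "inj_on \<phi> S" by (rule \<phi>(2))
    qed
    show "\<exists>(L :: nat set) le one R h. admissible L le one R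
                  \<and> bij_betw h S R
                  \<and> (\<forall>x\<in>S. \<forall>y\<in>S. h (add x y) = jm_join L le (h x) (h y)
                                 \<and> h (mul x y) = compose L (h x) (h y))" by (rule final)
  qed
qed

end
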